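(* Let $U,V$ be finite sets of positive integers with $k_1$ and $k_2$ elements respectively, $k=k_1+k_2$, and let $N,\beta$ be real numbers. For each $u\in U$ let $R_u$ be a nonzero polynomial of degree $u$ with leading coefficient $r_u$, and for each $v\in V$ let $R_v'$ be a nonzero polynomial of degree $v$ with leading coefficient $r'_v$ (the polynomials attached to $U$ and to $V$ are different polynomials even if $U\cap V\neq\emptyset$). Define $$P(x)=\frac{\det M(x)}{\prod_{i=1}^{k_2}s^{N-k+1}_{k_2-i+1}(x)\,s^{N+\beta-i+2}_{i-1}(x)},$$ where $M(x)$ is the $k\times k$ matrix whose columns are indexed by $j=1,\dots,k$, whose first $k_1$ rows are, for $u\in U$ in increasing order, $\big(R_u(x+j-1)\big)_{j=1}^k$, and whose last $k_2$ rows are, for $v\in V$ in increasing order, $\big(s^{N-k+1}_{k-j+1}(x)\,s^{N+\beta+1}_{j-1}(x+j-1)\,R'_v(x+j-1)\big)_{j=1}^k$. If $\beta+u-v\neq 0$ for all $u\in U$, $v\in V$, then $P$ is a polynomial of degree $\sum_{u\in U}u+\sum_{v\in V}v-\binom{k_1}{2}-\binom{k_2}{2}$ with leading coefficient $$V_UV_V\prod_{u\in U}r_u\prod_{v\in V}r'_v\prod_{u\in U,v\in V}(\beta+u-v).$$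
   Context: $(a)_0=1$, $(a)_j=a(a+1)\cdots(a+j-1)$ is the Pochhammer symbol, and for $u\in\mathbb C$, $s^u_j(x)=(u-x)_j$, a polynomial of degree $j$ in $x$. For a finite set $F=\{f_1<\dots<f_m\}$, $V_F=\prod_{1\le i<j\le m}(f_j-f_i)$ is its Vandermonde product (empty product $=1$). *)

theory Defs
  imports "HOL-Computational_Algebra.Polynomial" "Jordan_Normal_Form.Determinant"
begin

definition s_poch :: "real \<Rightarrow> nat \<Rightarrow> real \<Rightarrow> real" where
  "s_poch u j x = pochhammer (u - x) j"

definition vandermonde :: "nat set \<Rightarrow> real" where
  "vandermonde F = (\<Prod>(a,b) \<in> {(a,b). a \<in> F \<and> b \<in> F \<and> a < b}. real b - real a)"

text \<open>The k x k matrix M(x), 0-based indices: row i, column j corresponds to j+1 in the paper.\<close>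
definition M_mat :: "nat set \<Rightarrow> nat set \<Rightarrow> real \<Rightarrow> real \<Rightarrow> (nat \<Rightarrow> real poly) \<Rightarrow> (nat \<Rightarrow> real poly)
    \<Rightarrow> real \<Rightarrow> real mat" where
  "M_mat U V N \<beta> R R' x =
    (let k1 = card U; k2 = card V; k = k1 + k2 in
     mat k k (\<lambda>(i,j).
       if i < k1 then poly (R (sorted_list_of_set U ! i)) (x + real j)
       else s_poch (N - real k + 1) (k - j) x * s_poch (N + \<beta> + 1) j (x + real j)
            * poly (R' (sorted_list_of_set V ! (i - k1))) (x + real j)))"

definition denom :: "nat \<Rightarrow> nat \<Rightarrow> real \<Rightarrow> real \<Rightarrow> real \<Rightarrow> real" where
  "denom k k2 N \<beta> x =
     (\<Prod>i = 1..k2. s_poch (N - real k + 1) (k2 - i + 1) x * s_poch (N + \<beta> - real i + 2) (i - 1) x)"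

definition P_fun :: "nat set \<Rightarrow> nat set \<Rightarrow> real \<Rightarrow> real \<Rightarrow> (nat \<Rightarrow> real poly) \<Rightarrow> (nat \<Rightarrow> real poly)
    \<Rightarrow> real \<Rightarrow> real" where
  "P_fun U V N \<beta> R R' x =
     det (M_mat U V N \<beta> R R' x) / denom (card U + card V) (card V) N \<beta> x"

end

theory Submission imports Defs begin

lemma poly_det: "poly (det A) a = det (map_mat (\<lambda>p. poly p a) A)"
  unfolding det_def by (simp add: poly_sum poly_prod of_int_poly)

lemma coeff_of_int_mult: "coeff (of_int k * (q::'a::comm_ring_1 poly)) n = of_int k * coeff q n"
  by (simp add: of_int_poly)

lemma coeff_mult_bound:
  fixes p q :: "'a::comm_semiring_1 poly"
  assumes "degree p \<le> m" "degree q \<le> n"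
  shows "coeff (p*q) (m+n) = coeff p m * coeff q n"
proof -
  have "coeff (p*q) (m+n) = (\<Sum>i\<le>m+n. coeff p i * coeff q (m+n-i))" by (rule coeff_mult)
  also have "\<dots> = (\<Sum>i\<in>{m}. coeff p i * coeff q (m+n-i))"
  proof (rule sum.mono_neutral_right)
    show "\<forall>i\<in>{..m + n} - {m}. coeff p i * coeff q (m + n - i) = 0"
    proof
      fix i assume i: "i \<in> {..m + n} - {m}"
      show "coeff p i * coeff q (m + n - i) = 0"
      proof (cases "i < m")
        case True
        then have "coeff q (m+n-i) = 0" using assms(2) i by (intro coeff_eq_0) auto
        then show ?thesis by simp
      next
        case False
        then have "coeff p i = 0" using assms(1) i by (intro coeff_eq_0) auto
        then show ?thesis by simp
      qed
    qed
  qed auto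
  finally show ?thesis by simp
qed

lemma coeff_prod_bound:
  fixes f :: "'b \<Rightarrow> 'a::comm_semiring_1 poly"
  assumes "finite I" "\<And>i. i\<in>I \<Longrightarrow> degree (f i) \<le> d i"
  shows "degree (prod f I) \<le> sum d I \<and> coeff (prod f I) (sum d I) = (\<Prod>i\<in>I. coeff (f i) (d i))"
  using assms
proof (induction I rule: finite_induct)
  case empty then show ?case by simp
next
  case (insert x F)
  then have IH: "degree (prod f F) \<le> sum d F" "coeff (prod f F) (sum d F) = (\<Prod>i\<in>F. coeff (f i) (d i))"
    by auto
  have dx: "degree (f x) \<le> d x" using insert by auto
  have "degree (f x * prod f F) \<le> d x + sum d F"
    using degree_mult_le[of "f x" "prod f F"] IH dx by linarith
  moreover have "coeff (f x * prod f F) (d x + sum d F) = coeff (f x) (d x) * coeff (prod f F) (sum d F)"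
    by (rule coeff_mult_bound[OF dx IH(1)])
  ultimately show ?case using insert IH by simp
qed

lemma det_coeff_bound:
  fixes A :: "'a::comm_ring_1 poly mat" and a :: "nat \<Rightarrow> nat"
  assumes A: "A \<in> carrier_mat n n"
    and deg: "\<And>i j. i < n \<Longrightarrow> j < n \<Longrightarrow> A $$ (i,j) = 0 \<or> degree (A $$ (i,j)) + j \<le> a i"
  shows "degree (det A) \<le> sum a {0..<n} - sum id {0..<n}"
    and "coeff (det A) (sum a {0..<n} - sum id {0..<n}) = det (mat n n (\<lambda>(i,j). coeff (A $$ (i,j)) (a i - j)))"
    and "det (mat n n (\<lambda>(i,j). coeff (A $$ (i,j)) (a i - j))) \<noteq> 0 \<Longrightarrow> sum id {0..<n} \<le> sum a {0..<n}"
proof -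
  define C where "C = mat n n (\<lambda>(i,j). coeff (A $$ (i,j)) (a i - j))"
  define D where "D = sum a {0..<n} - sum id {0..<n}"
  have C: "C \<in> carrier_mat n n" unfolding C_def by simp
  have key: "(degree (\<Prod>i=0..<n. A $$ (i, p i)) \<le> D) \<and>
      coeff (\<Prod>i=0..<n. A $$ (i, p i)) D = (\<Prod>i=0..<n. C $$ (i, p i)) \<and>
      ((\<Prod>i=0..<n. C $$ (i, p i)) \<noteq> 0 \<longrightarrow> sum id {0..<n} \<le> sum a {0..<n})"
    if p: "p permutes {0..<n}" for p
  proof (cases "\<exists>i<n. A $$ (i, p i) = 0")
    case True
    then obtain i where i: "i < n" "A $$ (i, p i) = 0" by auto
    have pi: "p i < n" using p i(1) permutes_in_image by fastforce
    have "(\<Prod>i=0..<n. A $$ (i, p i)) = 0" using i by (intro prod_zero) auto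
    moreover have "(\<Prod>i=0..<n. C $$ (i, p i)) = 0"
      using i pi by (intro prod_zero bexI[of _ i]) (auto simp: C_def)
    ultimately show ?thesis by simp
  next
    case False
    have pin: "p i < n" if "i < n" for i using p that permutes_in_image by fastforce
    have dg: "degree (A $$ (i, p i)) + p i \<le> a i" if "i < n" for i
      using deg[OF that pin[OF that]] False that by auto
    have sp: "sum p {0..<n} = sum id {0..<n}"
      using sum.permute[OF p, of id] by (simp add: comp_def)
    have le: "sum p {0..<n} \<le> sum a {0..<n}"
      by (rule sum_mono) (use dg in fastforce)
    have sd: "(\<Sum>i=0..<n. a i - p i) = D"
      unfolding D_def using dg sp by (subst sum_subtractf_nat) fastforce+
    have cp: "degree (\<Prod>i=0..<n. A $$ (i, p i)) \<le> (\<Sum>i=0..<n. a i - p i) \<and>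
       coeff (\<Prod>i=0..<n. A $$ (i, p i)) (\<Sum>i=0..<n. a i - p i) = (\<Prod>i=0..<n. coeff (A $$ (i, p i)) (a i - p i))"
      by (rule coeff_prod_bound) (use dg in fastforce)+
    have "(\<Prod>i=0..<n. coeff (A $$ (i, p i)) (a i - p i)) = (\<Prod>i=0..<n. C $$ (i, p i))"
      by (rule prod.cong) (auto simp: C_def pin)
    then show ?thesis using cp sd le sp by auto
  qed
  have "coeff (det A) D = (\<Sum>p\<in>{p. p permutes {0..<n}}. signof p * coeff (\<Prod>i=0..<n. A $$ (i, p i)) D)"
    unfolding det_def'[OF A] coeff_sum coeff_of_int_mult ..
  also have "\<dots> = (\<Sum>p\<in>{p. p permutes {0..<n}}. signof p * (\<Prod>i=0..<n. C $$ (i, p i)))"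
    by (rule sum.cong) (use key in auto)
  also have "\<dots> = det C" unfolding det_def'[OF C] ..
  finally show "coeff (det A) (sum a {0..<n} - sum id {0..<n}) = det (mat n n (\<lambda>(i,j). coeff (A $$ (i,j)) (a i - j)))"
    unfolding D_def C_def .
  show "degree (det A) \<le> sum a {0..<n} - sum id {0..<n}"
    unfolding det_def'[OF A] D_def[symmetric]
  proof (rule degree_sum_le)
    fix p assume "p \<in> {p. p permutes {0..<n}}"
    then have "degree (\<Prod>i=0..<n. A $$ (i, p i)) \<le> D" using key by auto
    then show "degree (signof p * (\<Prod>i=0..<n. A $$ (i, p i))) \<le> D"
      by (simp add: of_int_poly) (meson degree_smult_le order_trans)
  qed (simp add: finite_permutations)
  assume "det (mat n n (\<lambda>(i,j). coeff (A $$ (i,j)) (a i - j))) \<noteq> 0"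
  then have "det C \<noteq> 0" unfolding C_def .
  then obtain p where "p permutes {0..<n}" "signof p * (\<Prod>i=0..<n. C $$ (i, p i)) \<noteq> 0"
    unfolding det_def'[OF C] by (metis (mono_tags, lifting) mem_Collect_eq sum.neutral)
  then show "sum id {0..<n} \<le> sum a {0..<n}" using key by fastforce
qed


definition Dif :: "(nat \<Rightarrow> 'a::comm_ring_1) \<Rightarrow> nat \<Rightarrow> 'a" where
  "Dif \<phi> j = (\<Sum>l\<le>j. (-1)^(j-l) * of_nat (j choose l) * \<phi> l)"

lemma Dif_0[simp]: "Dif \<phi> 0 = \<phi> 0"
  by (simp add: Dif_def)

lemma Dif_Suc: "Dif \<phi> (Suc j) = Dif (\<lambda>l. \<phi> (Suc l)) j - Dif \<phi> j"
proof -
  have A: "Dif \<phi> (Suc j) = (-1)^(Suc j) * \<phi> 0 + (\<Sum>l\<le>j. (-1)^(j-l) * of_nat (Suc j choose Suc l) * \<phi> (Suc l))"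
    unfolding Dif_def by (subst sum.atMost_Suc_shift) simp
  have B: "(\<Sum>l\<le>j. (-1)^(j-l) * of_nat (Suc j choose Suc l) * \<phi> (Suc l)) =
     Dif (\<lambda>l. \<phi> (Suc l)) j + (\<Sum>l\<le>j. (-1)^(j-l) * of_nat (j choose Suc l) * \<phi> (Suc l))"
    unfolding Dif_def by (simp add: sum.distrib[symmetric] algebra_simps)
  have C: "(-1)^(Suc j) * \<phi> 0 + (\<Sum>l\<le>j. (-1)^(j-l) * of_nat (j choose Suc l) * \<phi> (Suc l)) = - Dif \<phi> j"
  proof (cases j)
    case 0
    then show ?thesis by (simp add: Dif_def)
  next
    case (Suc m)
    have D: "Dif \<phi> j = (-1)^(Suc m) * \<phi> 0 + (\<Sum>l\<le>m. (-1)^(m-l) * of_nat (Suc m choose Suc l) * \<phi> (Suc l))"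
      unfolding Dif_def Suc by (subst sum.atMost_Suc_shift) simp
    have E: "(\<Sum>l\<le>j. (-1)^(j-l) * of_nat (j choose Suc l) * \<phi> (Suc l)) =
        (\<Sum>l\<le>m. (-1)^(Suc m - l) * of_nat (Suc m choose Suc l) * \<phi> (Suc l))"
      unfolding Suc by (subst sum.atMost_Suc) (simp add: binomial_eq_0)
    also have "\<dots> = - (\<Sum>l\<le>m. (-1)^(m - l) * of_nat (Suc m choose Suc l) * \<phi> (Suc l))"
      unfolding sum_negf[symmetric]
      by (rule sum.cong) (auto simp: Suc_diff_le)
    finally show ?thesis using D Suc by simp
  qed
  define X where "X = (-1)^(Suc j) * \<phi> 0"
  define S where "S = (\<Sum>l\<le>j. (-1)^(j-l) * of_nat (j choose Suc l) * \<phi> (Suc l))"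
  have "Dif \<phi> (Suc j) = Dif (\<lambda>l. \<phi> (Suc l)) j + (X + S)"
    using A B unfolding X_def[symmetric] S_def[symmetric] by (simp only: ac_simps)
  also have "X + S = - Dif \<phi> j" using C unfolding X_def S_def .
  finally show ?thesis by simp
qed

lemma Dif_hom:
  assumes "\<And>x y. F (x - y) = F x - F y"
  shows "Dif (\<lambda>l. F (\<phi> l)) j = F (Dif \<phi> j)"
proof (induction j arbitrary: \<phi>)
  case 0 then show ?case by simp
next
  case (Suc j)
  show ?case unfolding Dif_Suc using Suc[of \<phi>] Suc[of "\<lambda>l. \<phi> (Suc l)"] assms by simp
qed

lemma Dif_diff: "Dif (\<lambda>l. \<phi> l - \<psi> l) j = Dif \<phi> j - Dif \<psi> j"
  unfolding Dif_def by (simp add: sum_subtractf algebra_simps)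

lemma Dif_cong: "(\<And>l. l \<le> j \<Longrightarrow> \<phi> l = \<psi> l) \<Longrightarrow> Dif \<phi> j = Dif \<psi> j"
  unfolding Dif_def by (rule sum.cong) auto

lemma Dif_zero: "Dif (\<lambda>l. 0) j = 0"
  unfolding Dif_def by simp

definition ff :: "real \<Rightarrow> nat \<Rightarrow> real" where
  "ff y j = (\<Prod>t<j. y - of_nat t)"

lemma ff_Suc: "ff y (Suc j) = y * ff (y - 1) j"
  unfolding ff_def by (subst prod.lessThan_Suc_shift) (simp add: algebra_simps)

abbreviation sh :: "real poly \<Rightarrow> real poly" where
  "sh h \<equiv> h \<circ>\<^sub>p [:1,1:]"

lemma pcompose_power_left: "([:0,1:] ^ i) \<circ>\<^sub>p q = q ^ i"
  by (induction i) (simp_all add: pcompose_mult pcompose_pCons pcompose_1)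

lemma coeff_sh:
  assumes "degree h \<le> n"
  shows "coeff (sh h) m = (\<Sum>i\<le>n. coeff h i * of_nat (i choose m))"
proof -
  have "sh h = (\<Sum>i\<le>n. smult (coeff h i) ([:1,1:] ^ i))"
    by (subst poly_as_sum_of_monoms'[OF assms, symmetric])
       (simp add: pcompose_sum monom_altdef pcompose_smult pcompose_power_left)
  then have "coeff (sh h) m = (\<Sum>i\<le>n. coeff h i * coeff ([:1,1:] ^ i) m)"
    by (simp add: coeff_sum)
  also have "\<dots> = (\<Sum>i\<le>n. coeff h i * of_nat (i choose m))"
  proof (rule sum.cong)
    fix i
    show "coeff h i * coeff ([:1,1:] ^ i) m = coeff h i * of_nat (i choose m)"
    proof (cases "m \<le> i")
      case True then show ?thesis by (simp add: coeff_linear_poly_power)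
    next
      case False
      then have "coeff ([:1::real,1:] ^ i) m = 0"
        by (intro coeff_eq_0) (simp add: degree_linear_power)
      then show ?thesis using False by simp
    qed
  qed simp
  finally show ?thesis .
qed

lemma coeff_sh_high:
  assumes "degree h \<le> n" "n < m" shows "coeff (sh h) m = 0"
  using assms by (subst coeff_sh[OF assms(1)]) (simp add: binomial_eq_0)

lemma coeff_sh_top:
  assumes "degree h \<le> n" shows "coeff (sh h) n = coeff h n"
proof -
  have "coeff (sh h) n = (\<Sum>i\<in>{n}. coeff h i * of_nat (i choose n))"
    unfolding coeff_sh[OF assms]
    by (rule sum.mono_neutral_right) (auto simp: binomial_eq_0)
  then show ?thesis by simp
qed

lemma coeff_sh_next:
  assumes "degree h \<le> n" "n \<ge> 1" shows "coeff (sh h) (n-1) = coeff h (n-1) + of_nat n * coeff h n"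
proof -
  have "coeff (sh h) (n-1) = (\<Sum>i\<in>{n-1,n}. coeff h i * of_nat (i choose (n-1)))"
    unfolding coeff_sh[OF assms(1)]
    by (rule sum.mono_neutral_right) (use assms in \<open>auto simp: binomial_eq_0\<close>)
  moreover have "n choose (n - 1) = n" using binomial_symmetric[of "n-1" n] assms by simp
  ultimately show ?thesis using assms by (simp add: algebra_simps)
qed

lemma pcompose_shift_shift: "(h \<circ>\<^sub>p [:1,1:]) \<circ>\<^sub>p [:c,1:] = h \<circ>\<^sub>p [:c+1,1::real:]"
proof -
  have "[:1,1:] \<circ>\<^sub>p [:c,1:] = [:c+1,1::real:]" by (simp add: pcompose_pCons)
  then show ?thesis by (simp add: pcompose_assoc[symmetric])
qed

lemma Dif_U:
  assumes "degree f \<le> n"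
  shows "(Dif (\<lambda>l. f \<circ>\<^sub>p [:of_nat l,1:]) j = 0 \<or> degree (Dif (\<lambda>l. f \<circ>\<^sub>p [:of_nat l,1:]) j) + j \<le> n)
     \<and> coeff (Dif (\<lambda>l. f \<circ>\<^sub>p [:of_nat l,1:]) j) (n - j) = coeff f n * ff (of_nat n) j"
  using assms
proof (induction j arbitrary: f n)
  case 0
  then show ?case by (simp add: ff_def)
next
  case (Suc j)
  define g where "g = sh f - f"
  have eq: "Dif (\<lambda>l. f \<circ>\<^sub>p [:of_nat l,1:]) (Suc j) = Dif (\<lambda>l. g \<circ>\<^sub>p [:of_nat l,1:]) j"
    unfolding Dif_Suc g_def pcompose_diff Dif_diff
    by (simp add: pcompose_shift_shift add.commute)
  show ?case
  proof (cases n)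
    case 0
    then obtain c where f: "f = [:c:]" using Suc.prems by (metis degree_0_id le_zero_eq)
    have "g = 0" unfolding g_def f by simp
    then show ?thesis unfolding eq using 0 by (simp add: Dif_zero ff_def) (cases j; simp)
  next
    case (Suc n')
    have dg: "degree g \<le> n'"
    proof (rule degree_le, intro allI impI)
      fix m assume "n' < m"
      then show "coeff g m = 0"
        unfolding g_def using Suc Suc.prems coeff_sh_high coeff_sh_top coeff_eq_0
        by (cases "m = n") auto
    qed
    have cg: "coeff g n' = of_nat n * coeff f n"
      unfolding g_def using coeff_sh_next[OF Suc.prems] Suc by simp
    note IH = Suc.IH[OF dg]
    show ?thesis unfolding eq using IH cg Suc
      by (auto simp: ff_Suc algebra_simps)
  qed
qed


lemma poly_pochhammer: "poly (pochhammer p m) x = pochhammer (poly p x) m"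
  by (induction m) (simp_all add: pochhammer_Suc of_nat_poly)

lemma pochhammer_pcompose: "pochhammer p m \<circ>\<^sub>p q = pochhammer (p \<circ>\<^sub>p q) m"
  by (induction m) (simp_all add: pochhammer_Suc pcompose_mult pcompose_add of_nat_poly pcompose_1)

lemma sh_L: "sh [:c,-1:] = [:c-1,-1:]"
  by (simp add: pcompose_pCons)

lemma L_plus_nat: "[:c,-1:] + (of_nat m :: real poly) = [:c + of_nat m, -1:]"
  by (simp add: of_nat_poly)

lemma L_plus_1: "[:c,-1:] + (1 :: real poly) = [:c + 1, -1:]"
  by (simp add: one_pCons)

lemma pochL_deg: "degree (pochhammer [:c,-1:] m) = m \<and> coeff (pochhammer [:c::real,-1:] m) m = (-1)^m"
proof (induction m)
  case 0 then show ?case by simp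
next
  case (Suc m)
  have ne: "pochhammer [:c,-1:] m \<noteq> 0" using Suc by (metis one_neq_zero coeff_0 power_eq_0_iff neg_one_neq_zero)
  have e: "pochhammer [:c,-1:] (Suc m) = pochhammer [:c,-1:] m * [:c + of_nat m, -1:]"
    by (simp add: pochhammer_Suc L_plus_nat)
  have d: "degree (pochhammer [:c,-1:] (Suc m)) = Suc m"
    unfolding e using ne Suc by (subst degree_mult_eq) auto
  have "coeff (pochhammer [:c,-1:] (Suc m)) (Suc m) = coeff (pochhammer [:c,-1:] m) m * coeff [:c + of_nat m, -1:] 1"
    unfolding e using coeff_mult_bound[of "pochhammer [:c,-1:] m" m "[:c + of_nat m, -1:]" 1] Suc by simp
  then show ?case using d Suc by simp
qed

lemma Qlem: "pochhammer [:c - of_nat j, -1:] j = (\<Prod>t<j. [:c - 1 - of_nat t, -1::real:])"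
proof (induction j)
  case 0 then show ?case by simp
next
  case (Suc j)
  have "pochhammer [:c - of_nat (Suc j), -1:] (Suc j) = [:c - of_nat (Suc j), -1:] * pochhammer ([:c - of_nat (Suc j), -1:] + 1) j"
    by (rule pochhammer_rec)
  also have "[:c - of_nat (Suc j), -1:] + 1 = [:c - of_nat j, -1::real:]"
    by (simp add: L_plus_1)
  finally show ?case using Suc by (simp add: lessThan_Suc algebra_simps)
qed

lemma coeff_L_mult: "coeff ([:c,-1:] * (p::real poly)) m = c * coeff p m - (if m = 0 then 0 else coeff p (m-1))"
  by (cases m) (simp_all add: mult_pCons_left coeff_pCons)

fun Bp :: "real \<Rightarrow> real \<Rightarrow> real poly \<Rightarrow> nat \<Rightarrow> real poly" where
  "Bp N \<beta> g 0 = g"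
| "Bp N \<beta> g (Suc j) = [:N+\<beta>,-1:] * sh (Bp N \<beta> g j) - [:N - of_nat j, -1:] * Bp N \<beta> g j"

lemma Bp_deg:
  assumes "degree g \<le> v"
  shows "degree (Bp N \<beta> g j) \<le> v \<and> coeff (Bp N \<beta> g j) v = coeff g v * pochhammer (\<beta> - of_nat v) j"
proof (induction j)
  case 0 then show ?case using assms by simp
next
  case (Suc j)
  define h where "h = Bp N \<beta> g j"
  have dh: "degree h \<le> v" and ch: "coeff h v = coeff g v * pochhammer (\<beta> - of_nat v) j"
    using Suc unfolding h_def by auto
  have cn: "coeff (Bp N \<beta> g (Suc j)) m = (N+\<beta>) * coeff (sh h) m - (if m = 0 then 0 else coeff (sh h) (m-1))
      - ((N - of_nat j) * coeff h m - (if m = 0 then 0 else coeff h (m-1)))" for m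
    by (simp only: Bp.simps h_def[symmetric] coeff_diff coeff_L_mult)
  have "degree (Bp N \<beta> g (Suc j)) \<le> v"
  proof (rule degree_le, intro allI impI)
    fix m assume m: "v < m"
    have z: "coeff (sh h) m = 0" using coeff_sh_high[OF dh m] .
    have z2: "coeff h m = 0" using dh m by (intro coeff_eq_0) simp
    show "coeff (Bp N \<beta> g (Suc j)) m = 0"
    proof (cases "m - 1 = v")
      case True
      then show ?thesis unfolding cn using z z2 m coeff_sh_top[OF dh] by auto
    next
      case False
      then have "v < m - 1" using m by simp
      then have "coeff (sh h) (m-1) = 0" "coeff h (m-1) = 0" using coeff_sh_high[OF dh] dh
        by (auto intro: coeff_eq_0)
      then show ?thesis unfolding cn using z z2 m by auto
    qed
  qed
  moreover have "coeff (Bp N \<beta> g (Suc j)) v = coeff h v * (\<beta> - of_nat v + of_nat j)"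
  proof (cases "v = 0")
    case True
    then show ?thesis unfolding cn using coeff_sh_top[OF dh] by (simp add: algebra_simps)
  next
    case False
    then show ?thesis unfolding cn using coeff_sh_top[OF dh] coeff_sh_next[OF dh] by (simp add: algebra_simps)
  qed
  ultimately show ?case using ch by (simp add: pochhammer_Suc)
qed


definition Pp :: "real \<Rightarrow> nat \<Rightarrow> nat \<Rightarrow> real poly" where
  "Pp a k l = pochhammer [:a,-1:] (k - l)"

definition Qp :: "real \<Rightarrow> nat \<Rightarrow> real poly" where
  "Qp c l = (\<Prod>t<l. [:c - of_nat t, -1:])"

lemma Pp_Suc: "l < k \<Longrightarrow> Pp (N - of_nat k + 1) k l = Pp (N - of_nat k + 1) k (Suc l) * [:N - of_nat l, -1:]"
proof -
  assume l: "l < k"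
  have e: "k - l = Suc (k - Suc l)" using l by simp
  have "of_nat (k - Suc l) = (of_nat k - of_nat l - 1 :: real)" using l by (simp add: of_nat_diff)
  then show ?thesis unfolding Pp_def e pochhammer_Suc L_plus_nat by (simp add: algebra_simps)
qed

lemma sh_Pp: "l < k \<Longrightarrow> sh (Pp (N - of_nat k + 1) k l) = [:N - of_nat k, -1:] * Pp (N - of_nat k + 1) k (Suc l)"
proof -
  assume l: "l < k"
  have e: "k - l = Suc (k - Suc l)" using l by simp
  have "sh (Pp (N - of_nat k + 1) k l) = pochhammer [:N - of_nat k, -1:] (Suc (k - Suc l))"
    unfolding Pp_def pochhammer_pcompose sh_L e by simp
  also have "\<dots> = [:N - of_nat k, -1:] * pochhammer [:N - of_nat k + 1, -1:] (k - Suc l)"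
    by (simp add: pochhammer_rec L_plus_1)
  finally show ?thesis unfolding Pp_def .
qed

lemma Qp_Suc: "Qp c (Suc l) = [:c,-1:] * sh (Qp c l)"
proof -
  have e: "[:c - of_nat (Suc t), -1:] = [:c - of_nat t - 1, -1::real:]" for t
    by (simp add: algebra_simps)
  show ?thesis
    unfolding Qp_def pcompose_prod sh_L
    by (subst prod.lessThan_Suc_shift) (simp only: e of_nat_0 diff_zero)
qed

lemma sh_shift: "sh (g \<circ>\<^sub>p [:of_nat l,1:]) = g \<circ>\<^sub>p [:of_nat (Suc l),1::real:]"
proof -
  have "[:of_nat l,1:] \<circ>\<^sub>p [:1,1:] = [:of_nat (Suc l),1::real:]" by (simp add: pcompose_pCons)
  then show ?thesis by (simp add: pcompose_assoc[symmetric])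
qed

lemma Dif_V:
  fixes N \<beta> :: real and k :: nat and g :: "real poly"
  defines "\<Psi> \<equiv> (\<lambda>l. Pp (N - of_nat k + 1) k l * Qp (N+\<beta>) l * (g \<circ>\<^sub>p [:of_nat l,1:]))"
  assumes "j < k"
  shows "Dif \<Psi> j = Pp (N - of_nat k + 1) k j * Bp N \<beta> g j"
  using assms(2)
proof (induction j)
  case 0
  then show ?case by (simp add: \<Psi>_def Qp_def)
next
  case (Suc j)
  let ?P = "Pp (N - of_nat k + 1) k"
  have jk: "j < k" using Suc by simp
  have IH: "Dif \<Psi> j = ?P j * Bp N \<beta> g j" using Suc jk by simp
  have rel: "[:N - of_nat k, -1:] * \<Psi> (Suc l) = [:N+\<beta>,-1:] * sh (\<Psi> l)" if "l < k" for l
  proof -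
    have "sh (\<Psi> l) = sh (?P l) * sh (Qp (N+\<beta>) l) * sh (g \<circ>\<^sub>p [:of_nat l,1:])"
      unfolding \<Psi>_def by (simp add: pcompose_mult)
    also have "\<dots> = [:N - of_nat k, -1:] * ?P (Suc l) * sh (Qp (N+\<beta>) l) * (g \<circ>\<^sub>p [:of_nat (Suc l),1:])"
      unfolding sh_Pp[OF that] sh_shift ..
    finally have e: "sh (\<Psi> l) = [:N - of_nat k, -1:] * ?P (Suc l) * sh (Qp (N+\<beta>) l) * (g \<circ>\<^sub>p [:of_nat (Suc l),1:])" .
    have "[:N - of_nat k, -1:] * \<Psi> (Suc l) = [:N - of_nat k, -1:] * (?P (Suc l) * ([:N+\<beta>,-1:] * sh (Qp (N+\<beta>) l)) * (g \<circ>\<^sub>p [:of_nat (Suc l),1:]))"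
      by (simp only: \<Psi>_def Qp_Suc)
    then show ?thesis unfolding e by (simp only: mult_ac)
  qed
  have "[:N - of_nat k, -1:] * Dif (\<lambda>l. \<Psi> (Suc l)) j = Dif (\<lambda>l. [:N - of_nat k, -1:] * \<Psi> (Suc l)) j"
    by (rule Dif_hom[symmetric]) (simp only: right_diff_distrib)
  also have "\<dots> = Dif (\<lambda>l. [:N+\<beta>,-1:] * sh (\<Psi> l)) j"
    by (rule Dif_cong) (use rel Suc in auto)
  also have "\<dots> = [:N+\<beta>,-1:] * sh (Dif \<Psi> j)"
    by (rule Dif_hom) (simp only: pcompose_diff right_diff_distrib)
  also have "\<dots> = [:N+\<beta>,-1:] * [:N - of_nat k, -1:] * ?P (Suc j) * sh (Bp N \<beta> g j)"
    unfolding IH pcompose_mult sh_Pp[OF jk] by (simp only: mult_ac)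
  finally have A: "[:N - of_nat k, -1:] * Dif (\<lambda>l. \<Psi> (Suc l)) j =
     [:N+\<beta>,-1:] * [:N - of_nat k, -1:] * ?P (Suc j) * sh (Bp N \<beta> g j)" .
  have B: "[:N - of_nat k, -1:] * Dif \<Psi> j = [:N - of_nat k, -1:] * ?P (Suc j) * [:N - of_nat j, -1:] * Bp N \<beta> g j"
    unfolding IH Pp_Suc[OF jk] by (simp only: mult_ac)
  have "[:N - of_nat k, -1:] * Dif \<Psi> (Suc j) = [:N - of_nat k, -1:] * Dif (\<lambda>l. \<Psi> (Suc l)) j - [:N - of_nat k, -1:] * Dif \<Psi> j"
    by (simp only: Dif_Suc right_diff_distrib)
  also have "\<dots> = [:N+\<beta>,-1:] * [:N - of_nat k, -1:] * ?P (Suc j) * sh (Bp N \<beta> g j) - [:N - of_nat k, -1:] * ?P (Suc j) * [:N - of_nat j, -1:] * Bp N \<beta> g j"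
    by (simp only: A B)
  also have "\<dots> = [:N - of_nat k, -1:] * (?P (Suc j) * Bp N \<beta> g (Suc j))"
    by (simp only: Bp.simps right_diff_distrib mult_ac)
  finally have "[:N - of_nat k, -1:] * Dif \<Psi> (Suc j) = [:N - of_nat k, -1:] * (?P (Suc j) * Bp N \<beta> g (Suc j))" .
  moreover have "[:N - of_nat k, -1::real:] \<noteq> 0" by simp
  ultimately show ?case using mult_left_cancel by blast
qed

lemma dvd_prod_antitone:
  fixes f :: "nat \<Rightarrow> 'a::comm_semiring_1"
  assumes mono: "\<And>j j'. j \<le> j' \<Longrightarrow> f j' dvd f j"
  shows "finite S \<Longrightarrow> S \<subseteq> {..<L} \<Longrightarrow> card S = m \<Longrightarrow> (\<Prod>i<m. f (L - m + i)) dvd prod f S"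
proof (induction m arbitrary: S L)
  case 0 then show ?case by simp
next
  case (Suc m)
  have fS: "finite S" and SL: "S \<subseteq> {..<L}" and cS0: "card S = Suc m" using Suc.prems by auto
  have ne: "S \<noteq> {}" using cS0 by auto
  define s where "s = Max S"
  have sS: "s \<in> S" unfolding s_def using fS ne by simp
  have sL: "s < L" using sS SL by auto
  have S': "S - {s} \<subseteq> {..<L - 1}"
  proof
    fix x assume x: "x \<in> S - {s}"
    then have "x \<le> s" unfolding s_def using fS by auto
    then show "x \<in> {..<L - 1}" using x sL by auto
  qed
  have cS: "card (S - {s}) = m" using cS0 sS fS by simp
  have IH: "(\<Prod>i<m. f (L - 1 - m + i)) dvd prod f (S - {s})"
    using Suc.IH[OF _ S' cS] fS by simp
  have cL: "Suc m \<le> L" using card_mono[OF _ SL] cS0 by simp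
  have e1: "L - Suc m + m = L - 1" using cL by arith
  have e2: "L - Suc m + i = L - 1 - m + i" for i by arith
  have "(\<Prod>i<Suc m. f (L - Suc m + i)) = (\<Prod>i<m. f (L - Suc m + i)) * f (L - Suc m + m)"
    by (rule prod.lessThan_Suc)
  also have "\<dots> = (\<Prod>i<m. f (L - 1 - m + i)) * f (L - 1)" unfolding e1 by (simp only: e2)
  also have "\<dots> dvd prod f (S - {s}) * f s"
    by (rule mult_dvd_mono[OF IH mono]) (use sL in simp)
  also have "\<dots> = prod f S" using prod.remove[OF fS sS, of f] by (metis mult.commute)
  finally show ?case .
qed

lemma dvd_prod_mono:
  fixes f :: "nat \<Rightarrow> 'a::comm_semiring_1"
  assumes mono: "\<And>j j'. j \<le> j' \<Longrightarrow> f j dvd f j'"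
  shows "finite S \<Longrightarrow> card S = m \<Longrightarrow> (\<Prod>i<m. f i) dvd prod f S"
proof (induction m arbitrary: S)
  case 0 then show ?case by simp
next
  case (Suc m)
  have fS: "finite S" and cS0: "card S = Suc m" using Suc.prems by auto
  have ne: "S \<noteq> {}" using cS0 by auto
  define s where "s = Max S"
  have sS: "s \<in> S" unfolding s_def using fS ne by simp
  have cS: "card (S - {s}) = m" using cS0 sS fS by simp
  have IH: "(\<Prod>i<m. f i) dvd prod f (S - {s})" using Suc.IH[OF _ cS] fS by simp
  have "S \<subseteq> {..s}" unfolding s_def using fS by auto
  then have "card S \<le> Suc s" using card_mono[of "{..s}" S] by simp
  then have ms: "m \<le> s" using cS0 by simp
  have "(\<Prod>i<Suc m. f i) = (\<Prod>i<m. f i) * f m" by simp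
  also have "\<dots> dvd prod f (S - {s}) * f s"
    by (rule mult_dvd_mono[OF IH mono[OF ms]])
  also have "\<dots> = prod f S" using prod.remove[OF fS sS, of f] by (metis mult.commute)
  finally show ?case .
qed


lemma monic_lin_prod: "degree (\<Prod>i<m. [:- c i, 1::real:]) = m \<and> coeff (\<Prod>i<m. [:- c i, 1::real:]) m = 1"
proof (induction m)
  case 0 then show ?case by simp
next
  case (Suc m)
  let ?P = "\<Prod>i<m. [:- c i, 1::real:]"
  have ne: "?P \<noteq> 0" using Suc by auto
  have e: "(\<Prod>i<Suc m. [:- c i, 1::real:]) = ?P * [:- c m, 1:]" by simp
  have d: "degree (?P * [:- c m, 1:]) = Suc m" using ne Suc by (subst degree_mult_eq) auto
  have "coeff (?P * [:- c m, 1:]) (m + 1) = coeff ?P m * coeff [:- c m, 1:] 1"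
    by (rule coeff_mult_bound) (use Suc in auto)
  then show ?case unfolding e using d Suc by simp
qed

definition ffp :: "nat \<Rightarrow> real poly" where "ffp j = (\<Prod>t<j. [:- of_nat t, 1:])"

lemma poly_ffp: "poly (ffp j) z = ff z j"
  unfolding ffp_def ff_def by (simp add: poly_prod)

lemma ffp_deg: "degree (ffp j) = j" "coeff (ffp j) j = 1"
  unfolding ffp_def using monic_lin_prod[of "\<lambda>t. of_nat t" j] by auto

lemma poly_roots_eq:
  fixes p :: "real poly"
  assumes dp: "degree p \<le> n" and rt: "\<And>i. i < n \<Longrightarrow> poly p (r i) = 0"
    and ds: "\<And>i i'. i < n \<Longrightarrow> i' < n \<Longrightarrow> i \<noteq> i' \<Longrightarrow> r i \<noteq> r i'"
  shows "p = smult (coeff p n) (\<Prod>i<n. [:- r i, 1:])"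
proof -
  have dv: "m \<le> n \<Longrightarrow> (\<Prod>i<m. [:- r i, 1:]) dvd p" for m
  proof (induction m)
    case 0 then show ?case by simp
  next
    case (Suc m)
    then obtain q where q: "p = (\<Prod>i<m. [:- r i, 1:]) * q" by (auto elim: dvdE)
    have "(\<Prod>i<m. r m - r i) \<noteq> 0" using ds Suc.prems by (auto simp: prod_zero_iff)
    moreover have "poly p (r m) = (\<Prod>i<m. r m - r i) * poly q (r m)"
      unfolding q by (simp add: poly_prod)
    ultimately have "poly q (r m) = 0" using rt[of m] Suc.prems by simp
    then have "[:- r m, 1:] dvd q" using dvd_iff_poly_eq_0[of "- r m" q] by simp
    then have "(\<Prod>i<m. [:- r i, 1:]) * [:- r m, 1:] dvd (\<Prod>i<m. [:- r i, 1:]) * q"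
      by (rule mult_dvd_mono[OF dvd_refl])
    then show ?case unfolding q by simp
  qed
  obtain q where q: "p = (\<Prod>i<n. [:- r i, 1:]) * q" using dv[of n] by (auto elim: dvdE)
  note mon = monic_lin_prod[of r n]
  show ?thesis
  proof (cases "q = 0")
    case True then show ?thesis using q by simp
  next
    case False
    have ne: "(\<Prod>i<n. [:- r i, 1::real:]) \<noteq> 0" using mon by auto
    have "degree p = n + degree q" unfolding q using ne False mon by (simp add: degree_mult_eq)
    then have "degree q = 0" using dp by simp
    then have qc: "q = [:coeff q 0:]" by (metis degree_0_id)
    have "coeff p n = coeff q 0"
      unfolding q by (subst qc) (simp add: mon)
    then show ?thesis unfolding q by (subst qc) simp
  qed
qed

lemma det_row_scale:
  "det (mat n n (\<lambda>(i,j). c i * F i j)) = (\<Prod>i=0..<n. c i) * det (mat n n (\<lambda>(i,j). F i j :: 'a::comm_ring_1))"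
proof -
  have "det (mat n n (\<lambda>(i,j). c i * F i j)) = (\<Sum>p\<in>{p. p permutes {0..<n}}. signof p * (\<Prod>i=0..<n. c i * F i (p i)))"
    unfolding det_def'[OF mat_carrier]
    by (intro sum.cong refl arg_cong2[where f="(*)"] prod.cong) (auto intro: permutes_in_image)
  also have "\<dots> = (\<Sum>p\<in>{p. p permutes {0..<n}}. (\<Prod>i=0..<n. c i) * (signof p * (\<Prod>i=0..<n. F i (p i))))"
    by (simp add: prod.distrib mult_ac)
  also have "\<dots> = (\<Prod>i=0..<n. c i) * det (mat n n (\<lambda>(i,j). F i j))"
    unfolding det_def'[OF mat_carrier] sum_distrib_left
    by (intro sum.cong refl arg_cong2[where f="(*)"] prod.cong) (auto intro: permutes_in_image)
  finally show ?thesis .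
qed

lemma vdm:
  assumes "\<And>i i'. i < n \<Longrightarrow> i' < n \<Longrightarrow> i \<noteq> i' \<Longrightarrow> y i \<noteq> y i'"
  shows "det (mat n n (\<lambda>(i,j). ff (y i) j)) = (\<Prod>i'<n. \<Prod>i<i'. y i' - y i)"
  using assms
proof (induction n)
  case 0 then show ?case by (simp add: det_dim_zero[OF mat_carrier])
next
  case (Suc n)
  have IH: "det (mat n n (\<lambda>(i,j). ff (y i) j)) = (\<Prod>i'<n. \<Prod>i<i'. y i' - y i)"
    using Suc by simp
  define W :: "real poly mat" where "W = mat (Suc n) (Suc n) (\<lambda>(i,j). if i < n then [:ff (y i) j:] else ffp j)"
  have W: "W \<in> carrier_mat (Suc n) (Suc n)" unfolding W_def by simp
  have ev: "poly (det W) z = det (mat (Suc n) (Suc n) (\<lambda>(i,j). ff (if i < n then y i else z) j))" for z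
    unfolding poly_det by (rule arg_cong[of _ _ det], rule eq_matI) (auto simp: W_def poly_ffp)
  have root: "poly (det W) (y i) = 0" if i: "i < n" for i
  proof -
    let ?A = "mat (Suc n) (Suc n) (\<lambda>(i',j). ff (if i' < n then y i' else y i) j)"
    have iS: "i < Suc n" using i by simp
    have r: "row ?A i = row ?A n"
    proof (rule eq_vecI)
      fix j assume "j < dim_vec (row ?A n)"
      then have j: "j < Suc n" by simp
      show "row ?A i $ j = row ?A n $ j" using i iS j by simp
    qed simp
    show ?thesis unfolding ev
      by (rule det_identical_rows[OF mat_carrier _ iS _ r]) (use i in simp_all)
  qed
  have cofd: "degree (cofactor W n j) = 0" if "j < Suc n" for j
  proof -
    have "degree (det (mat_delete W n j)) \<le> 0 * n"
      by (rule degree_det_le) (auto simp: mat_delete_def W_def)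
    then have "degree (det (mat_delete W n j)) = 0" by simp
    moreover have "degree ((-1::real poly) ^ (n+j)) = 0"
      using degree_power_le[of "-1::real poly" "n+j"] by simp
    ultimately show ?thesis unfolding cofactor_def
      using degree_mult_le[of "(-1::real poly)^(n+j)" "det (mat_delete W n j)"] by simp
  qed
  have lap: "det W = (\<Sum>j<Suc n. ffp j * cofactor W n j)"
    unfolding laplace_expansion_row[OF W lessI]
    by (rule sum.cong) (auto simp: W_def)
  have dW: "degree (det W) \<le> n"
    unfolding lap
  proof (rule degree_sum_le)
    fix j assume "j \<in> {..<Suc n}"
    then show "degree (ffp j * cofactor W n j) \<le> n"
      using degree_mult_le[of "ffp j" "cofactor W n j"] cofd[of j] ffp_deg(1)[of j] by simp
  qed simp
  have cz: "coeff (ffp j * cofactor W n j) n = 0" if "j < n" for j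
    by (rule coeff_eq_0)
       (use degree_mult_le[of "ffp j" "cofactor W n j"] cofd[of j] ffp_deg(1)[of j] that in simp)
  have "coeff (det W) n = coeff (ffp n * cofactor W n n) (n + 0)"
    unfolding lap coeff_sum using cz by simp
  also have "\<dots> = coeff (cofactor W n n) 0"
    by (subst coeff_mult_bound) (auto simp: ffp_deg cofd)
  also have "\<dots> = poly (det (mat_delete W n n)) 0"
    unfolding cofactor_def by (simp add: poly_0_coeff_0[symmetric])
  also have "\<dots> = det (mat n n (\<lambda>(i,j). ff (y i) j))"
    unfolding poly_det by (rule arg_cong[of _ _ det], rule eq_matI) (auto simp: W_def mat_delete_def)
  finally have cW: "coeff (det W) n = (\<Prod>i'<n. \<Prod>i<i'. y i' - y i)" using IH by simp
  define c where "c = coeff (det W) n"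
  have eqW: "det W = smult c (\<Prod>i<n. [:- y i, 1:])"
    unfolding c_def by (rule poly_roots_eq[OF dW root]) (use Suc.prems in auto)
  have "poly (det W) (y n) = c * (\<Prod>i<n. y n - y i)"
    unfolding eqW by (simp add: poly_prod)
  then have "poly (det W) (y n) = (\<Prod>i'<n. \<Prod>i<i'. y i' - y i) * (\<Prod>i<n. y n - y i)"
    using cW unfolding c_def by simp
  moreover have "poly (det W) (y n) = det (mat (Suc n) (Suc n) (\<lambda>(i,j). ff (y i) j))"
    unfolding ev by (rule arg_cong[of _ _ det], rule eq_matI) (auto simp: less_Suc_eq)
  ultimately show ?case by simp
qed


lemma Qp_poch: "Qp c j = pochhammer [:c + 1 - of_nat j, -1:] j"
proof -
  have "pochhammer [:(c + 1) - of_nat j, -1:] j = (\<Prod>t<j. [:c + 1 - 1 - of_nat t, -1::real:])"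
    by (rule Qlem)
  then show ?thesis unfolding Qp_def by simp
qed

lemma poly_L: "poly [:c,-1:] x = (c::real) - x"
  by simp

definition Mp :: "nat set \<Rightarrow> nat set \<Rightarrow> real \<Rightarrow> real \<Rightarrow> (nat \<Rightarrow> real poly) \<Rightarrow> (nat \<Rightarrow> real poly) \<Rightarrow> real poly mat" where
  "Mp U V N \<beta> R R' = mat (card U + card V) (card U + card V) (\<lambda>(i,j).
     if i < card U then R (sorted_list_of_set U ! i) \<circ>\<^sub>p [:of_nat j,1:]
     else Pp (N - of_nat (card U + card V) + 1) (card U + card V) j * Qp (N+\<beta>) j
        * (R' (sorted_list_of_set V ! (i - card U)) \<circ>\<^sub>p [:of_nat j,1:]))"

lemma M_mat_eval: "M_mat U V N \<beta> R R' x = map_mat (\<lambda>p. poly p x) (Mp U V N \<beta> R R')"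
proof (rule eq_matI)
  fix i j assume i: "i < dim_row (map_mat (\<lambda>p. poly p x) (Mp U V N \<beta> R R'))"
    and j: "j < dim_col (map_mat (\<lambda>p. poly p x) (Mp U V N \<beta> R R'))"
  let ?k = "card U + card V"
  have ik: "i < ?k" "j < ?k" using i j by (auto simp: Mp_def)
  have e1: "poly (Pp (N - of_nat ?k + 1) ?k j) x = s_poch (N - real ?k + 1) (?k - j) x"
    unfolding Pp_def s_poch_def poly_pochhammer poly_L ..
  have e2: "poly (Qp (N+\<beta>) j) x = s_poch (N + \<beta> + 1) j (x + real j)"
    unfolding Qp_poch s_poch_def poly_pochhammer poly_L by (simp add: algebra_simps)
  show "M_mat U V N \<beta> R R' x $$ (i, j) = map_mat (\<lambda>p. poly p x) (Mp U V N \<beta> R R') $$ (i, j)"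
    using ik e1 e2 by (simp add: M_mat_def Mp_def Let_def poly_pcompose algebra_simps)
qed (auto simp: M_mat_def Mp_def Let_def)

definition denp :: "nat \<Rightarrow> nat \<Rightarrow> real \<Rightarrow> real \<Rightarrow> real poly" where
  "denp k k2 N \<beta> = (\<Prod>i = 1..k2. pochhammer [:N - of_nat k + 1, -1:] (k2 - i + 1)
        * pochhammer [:N + \<beta> - of_nat i + 2, -1:] (i - 1))"

lemma denp_eval: "poly (denp k k2 N \<beta>) x = denom k k2 N \<beta> x"
  unfolding denp_def denom_def by (simp add: poly_prod poly_pochhammer s_poch_def)

lemma denp_alt:
  assumes "k = k1 + k2"
  shows "denp k k2 N \<beta> = (\<Prod>i<k2. Pp (N - of_nat k + 1) k (k1 + i)) * (\<Prod>i<k2. Qp (N+\<beta>) i)"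
proof -
  have "denp k k2 N \<beta> = (\<Prod>i<k2. pochhammer [:N - of_nat k + 1, -1:] (k2 - Suc i + 1)
        * pochhammer [:N + \<beta> - of_nat (Suc i) + 2, -1:] (Suc i - 1))"
    unfolding denp_def One_nat_def by (simp only: prod.atLeast1_atMost_eq)
  also have "\<dots> = (\<Prod>i<k2. Pp (N - of_nat k + 1) k (k1 + i) * Qp (N+\<beta>) i)"
  proof (rule prod.cong)
    fix i assume "i \<in> {..<k2}"
    then have i: "i < k2" by simp
    have a: "k2 - Suc i + 1 = k - (k1 + i)" using i assms by simp
    have b: "N + \<beta> - of_nat (Suc i) + 2 = N + \<beta> + 1 - of_nat i" by simp
    show "pochhammer [:N - of_nat k + 1, -1:] (k2 - Suc i + 1) * pochhammer [:N + \<beta> - of_nat (Suc i) + 2, -1:] (Suc i - 1)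
       = Pp (N - of_nat k + 1) k (k1 + i) * Qp (N+\<beta>) i"
      unfolding Pp_def Qp_poch a b by simp
  qed simp
  finally show ?thesis by (simp add: prod.distrib)
qed

lemma Pp_dvd: "j \<le> j' \<Longrightarrow> Pp a k j' dvd Pp a k j"
proof -
  assume jj: "j \<le> j'"
  define d where "d = (k - j) - (k - j')"
  have e: "k - j = (k - j') + d" using jj unfolding d_def by arith
  have "pochhammer [:a,-1:] (k - j) = pochhammer [:a,-1:] (k - j') * pochhammer ([:a,-1:] + of_nat (k - j')) d"
    unfolding e by (rule pochhammer_product')
  then show ?thesis unfolding Pp_def by simp
qed

lemma Qp_dvd: "j \<le> j' \<Longrightarrow> Qp c j dvd Qp c j'"
  unfolding Qp_def by (rule prod_dvd_prod_subset) auto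

lemma denp_dvd:
  fixes A :: "real poly mat"
  assumes kk: "k = k1 + k2" and A: "A \<in> carrier_mat k k"
    and Ae: "\<And>i j. i < k \<Longrightarrow> j < k \<Longrightarrow> k1 \<le> i \<Longrightarrow> A $$ (i,j) = Pp (N - of_nat k + 1) k j * Qp (N+\<beta>) j * G i j"
  shows "denp k k2 N \<beta> dvd det A"
  unfolding det_def'[OF A]
proof (rule dvd_sum)
  fix p assume "p \<in> {p. p permutes {0..<k}}"
  then have p: "p permutes {0..<k}" by simp
  have pin: "p i < k" if "i < k" for i using p that permutes_in_image by fastforce
  let ?P = "Pp (N - of_nat k + 1) k" and ?Q = "Qp (N+\<beta>)"
  define S where "S = p ` {k1..<k}"
  have injp: "inj_on p {k1..<k}" using permutes_inj[OF p] by (simp add: inj_on_def inj_def)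
  have fS: "finite S" unfolding S_def by simp
  have SL: "S \<subseteq> {..<k}" unfolding S_def using pin by auto
  have cS: "card S = k2" unfolding S_def using card_image[OF injp] kk by simp
  have d1: "(\<Prod>i<k2. ?P (k - k2 + i)) dvd prod ?P S"
    by (rule dvd_prod_antitone[OF Pp_dvd fS SL cS])
  have d2: "(\<Prod>i<k2. ?Q i) dvd prod ?Q S"
    by (rule dvd_prod_mono[OF Qp_dvd fS cS])
  have kk2: "k - k2 = k1" using kk by simp
  have "denp k k2 N \<beta> dvd prod ?P S * prod ?Q S"
    unfolding denp_alt[OF kk] using mult_dvd_mono[OF d1 d2] kk2 by simp
  also have "prod ?P S * prod ?Q S = (\<Prod>i=k1..<k. ?P (p i)) * (\<Prod>i=k1..<k. ?Q (p i))"
    unfolding S_def prod.reindex[OF injp] by simp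
  also have "\<dots> dvd (\<Prod>i=k1..<k. ?P (p i) * ?Q (p i) * G i (p i))"
    by (simp add: prod.distrib)
  also have "(\<Prod>i=k1..<k. ?P (p i) * ?Q (p i) * G i (p i)) = (\<Prod>i=k1..<k. A $$ (i, p i))"
    by (rule prod.cong) (auto simp: Ae pin)
  also have "\<dots> dvd (\<Prod>i=0..<k1. A $$ (i, p i)) * (\<Prod>i=k1..<k. A $$ (i, p i))"
    by simp
  also have "\<dots> = (\<Prod>i=0..<k. A $$ (i, p i))"
    using kk by (simp add: prod.atLeastLessThan_concat)
  finally show "denp k k2 N \<beta> dvd signof p * (\<Prod>i=0..<k. A $$ (i, p i))"
    by (rule dvd_mult)
qed

definition Tm :: "nat \<Rightarrow> real poly mat" where
  "Tm k = mat k k (\<lambda>(l,j). if l \<le> j then (-1)^(j-l) * of_nat (j choose l) else 0)"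

lemma det_Tm: "det (Tm k) = 1"
proof -
  have ut: "upper_triangular (Tm k)" unfolding upper_triangular_def Tm_def by auto
  have "diag_mat (Tm k) = map (\<lambda>i. 1) [0..<k]"
    by (auto simp: diag_mat_def Tm_def intro!: map_cong)
  then show ?thesis using det_upper_triangular[OF ut, of k] by (simp add: Tm_def map_replicate_const)
qed

lemma mult_Tm:
  assumes A: "A \<in> carrier_mat k k" and i: "i < k" and j: "j < k"
  shows "(A * Tm k) $$ (i,j) = Dif (\<lambda>l. A $$ (i,l)) j"
proof -
  have "(A * Tm k) $$ (i,j) = (\<Sum>l\<in>{0..<k}. A $$ (i,l) * Tm k $$ (l,j))"
    using A i j by (simp add: scalar_prod_def Tm_def)
  also have "\<dots> = (\<Sum>l\<in>{..j}. (-1)^(j-l) * of_nat (j choose l) * A $$ (i,l))"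
    by (rule sum.mono_neutral_cong_right) (use j in \<open>auto simp: Tm_def\<close>)
  finally show ?thesis unfolding Dif_def .
qed


lemma prod_nth_set: "distinct xs \<Longrightarrow> (\<Prod>i<length xs. f (xs!i)) = prod f (set xs)"
proof -
  assume d: "distinct xs"
  have inj: "inj_on (nth xs) {..<length xs}" using d by (simp add: inj_on_def nth_eq_iff_index_eq)
  have "set xs = (nth xs) ` {..<length xs}" by (auto simp: in_set_conv_nth)
  then show ?thesis using prod.reindex[OF inj, of f] by simp
qed

lemma sum_nth_set: "distinct xs \<Longrightarrow> (\<Sum>i<length xs. f (xs!i)) = sum f (set xs)"
proof -
  assume d: "distinct xs"
  have inj: "inj_on (nth xs) {..<length xs}" using d by (simp add: inj_on_def nth_eq_iff_index_eq)
  have "set xs = (nth xs) ` {..<length xs}" by (auto simp: in_set_conv_nth)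
  then show ?thesis using sum.reindex[OF inj, of f] by simp
qed

lemma prod_split_add: "(\<Prod>i<m+(n::nat). f i) = (\<Prod>i<m. f i) * (\<Prod>i<n. f (m+i))"
  by (induction n) (simp_all add: mult.assoc)

lemma sum_split_add: "(\<Sum>i<m+(n::nat). f i) = (\<Sum>i<m. f i) + (\<Sum>i<n. f (m+i))"
  by (induction n) (simp_all add: add.assoc)

lemma two_sum: "2 * (\<Sum>i<n. i) = n * (n - 1::nat)"
proof (induction n)
  case 0 then show ?case by simp
next
  case (Suc n)
  have "2 * (\<Sum>i<Suc n. i) = 2 * (\<Sum>i<n. i) + 2 * n" by simp
  also have "\<dots> = n * (n - 1) + 2 * n" using Suc by simp
  also have "\<dots> = Suc n * (Suc n - 1)" by (cases n) (auto simp: algebra_simps)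
  finally show ?case .
qed

lemma two_choose: "2 * (n choose 2) = n * (n - 1::nat)"
proof (induction n)
  case 0 then show ?case by simp
next
  case (Suc n)
  have "Suc n choose 2 = n + (n choose 2)" by (simp add: numeral_2_eq_2)
  then show ?case using Suc by (cases n) (auto simp: algebra_simps)
qed

lemma vand_conv:
  assumes s: "sorted_wrt (<) xs"
  shows "(\<Prod>i'<length xs. \<Prod>i<i'. real (xs!i') - real (xs!i)) = vandermonde (set xs)"
proof -
  let ?n = "length xs"
  define IP where "IP = {(i,i'). i < i' \<and> i' < ?n}"
  define h where "h = (\<lambda>(i,i'). (xs!i, xs!i'))"
  have d: "distinct xs" using s strict_sorted_iff by blast
  have lt: "xs!i < xs!j" if "i < j" "j < ?n" for i j
    using s that by (simp add: sorted_wrt_iff_nth_less)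
  have img: "h ` IP = {(a,b). a \<in> set xs \<and> b \<in> set xs \<and> a < b}"
  proof
    show "h ` IP \<subseteq> {(a,b). a \<in> set xs \<and> b \<in> set xs \<and> a < b}"
      unfolding h_def IP_def using lt by auto
  next
    show "{(a,b). a \<in> set xs \<and> b \<in> set xs \<and> a < b} \<subseteq> h ` IP"
    proof
      fix ab assume "ab \<in> {(a,b). a \<in> set xs \<and> b \<in> set xs \<and> a < b}"
      then obtain a b where ab: "ab = (a,b)" "a \<in> set xs" "b \<in> set xs" "a < b" by auto
      then obtain i j where ij: "i < ?n" "j < ?n" "a = xs!i" "b = xs!j" by (auto simp: in_set_conv_nth)
      have "i < j"
      proof (rule ccontr)
        assume "\<not> i < j"
        then have "j = i \<or> j < i" by auto
        then show False using lt[of j i] ij ab by auto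
      qed
      then show "ab \<in> h ` IP" unfolding h_def IP_def using ab ij by auto
    qed
  qed
  have inj: "inj_on h IP" unfolding h_def IP_def inj_on_def using d by (auto simp: nth_eq_iff_index_eq)
  have "vandermonde (set xs) = (\<Prod>(a,b)\<in>h ` IP. real b - real a)"
    unfolding vandermonde_def img ..
  also have "\<dots> = (\<Prod>(i,i')\<in>IP. real (xs!i') - real (xs!i))"
    unfolding prod.reindex[OF inj] by (rule prod.cong) (auto simp: h_def)
  also have "IP = (\<lambda>(i',i). (i,i')) ` (SIGMA i':{..<?n}. {..<i'})"
    unfolding IP_def by auto
  also have "(\<Prod>(i,i')\<in>(\<lambda>(i',i). (i,i')) ` (SIGMA i':{..<?n}. {..<i'}). real (xs!i') - real (xs!i))
      = (\<Prod>(i',i)\<in>(SIGMA i':{..<?n}. {..<i'}). real (xs!i') - real (xs!i))"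
    by (subst prod.reindex) (auto simp: inj_on_def intro!: prod.cong)
  also have "\<dots> = (\<Prod>i'<?n. \<Prod>i<i'. real (xs!i') - real (xs!i))"
    by (subst prod.Sigma) auto
  finally show ?thesis ..
qed

lemma poch_ff: "pochhammer (\<beta> - real v) j = (-1)^j * ff (real v - \<beta>) j"
proof -
  have "pochhammer (\<beta> - real v) j = (\<Prod>t<j. (-1) * (real v - \<beta> - of_nat t))"
    unfolding pochhammer_prod atLeast0LessThan by (rule prod.cong) auto
  also have "\<dots> = (-1)^j * ff (real v - \<beta>) j"
    unfolding prod.distrib ff_def by simp
  finally show ?thesis .
qed


lemma denp_deg:
  assumes kk: "k = k1 + k2"
  shows "degree (denp k k2 N \<beta>) = k2 * k2 \<and> lead_coeff (denp k k2 N \<beta>) = (-1)^(k2*k2)"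
proof -
  define X where "X = (\<Prod>i<k2. Pp (N - of_nat k + 1) k (k1 + i))"
  define Y where "Y = (\<Prod>i<k2. Qp (N+\<beta>) i)"
  have Pe: "Pp (N - of_nat k + 1) k (k1 + i) = pochhammer [:N - of_nat k + 1, -1:] (k2 - i)" for i
    unfolding Pp_def using kk by (simp add: diff_add_eq_diff_diff_swap)
  have Pd: "degree (Pp (N - of_nat k + 1) k (k1 + i)) = k2 - i"
    and Pl: "lead_coeff (Pp (N - of_nat k + 1) k (k1 + i)) = (-1)^(k2 - i)"
    and Pn: "Pp (N - of_nat k + 1) k (k1 + i) \<noteq> 0" for i
    unfolding Pe using pochL_deg[of "N - of_nat k + 1" "k2 - i"] by auto
  have Qd: "degree (Qp (N+\<beta>) i) = i" and Ql: "lead_coeff (Qp (N+\<beta>) i) = (-1)^i"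
    and Qn: "Qp (N+\<beta>) i \<noteq> 0" for i
    unfolding Qp_poch using pochL_deg[of "N + \<beta> + 1 - of_nat i" i] by auto
  have Xn: "X \<noteq> 0" unfolding X_def using Pn by (simp add: prod_zero_iff)
  have Yn: "Y \<noteq> 0" unfolding Y_def using Qn by (simp add: prod_zero_iff)
  have dX: "degree X = (\<Sum>i<k2. k2 - i)" unfolding X_def
    by (subst degree_prod_eq_sum_degree) (use Pn Pd in auto)
  have dY: "degree Y = (\<Sum>i<k2. i)" unfolding Y_def
    by (subst degree_prod_eq_sum_degree) (use Qn Qd in auto)
  have "degree (X * Y) = (\<Sum>i<k2. k2 - i) + (\<Sum>i<k2. i)"
    using degree_mult_eq[OF Xn Yn] dX dY by simp
  also have "\<dots> = (\<Sum>i<k2. k2)" unfolding sum.distrib[symmetric] by (rule sum.cong) auto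
  finally have d: "degree (X * Y) = k2 * k2" by simp
  have "lead_coeff (X * Y) = (\<Prod>i<k2. (-1)^(k2-i)) * (\<Prod>i<k2. (-1)^i)"
    unfolding lead_coeff_mult X_def Y_def lead_coeff_prod Pl Ql ..
  also have "\<dots> = (\<Prod>i<k2. (-1::real)^k2)"
    unfolding prod.distrib[symmetric] by (rule prod.cong) (auto simp: power_add[symmetric])
  also have "\<dots> = (-1)^(k2*k2)" by (simp add: power_mult)
  finally show ?thesis using d unfolding denp_alt[OF kk] X_def Y_def by simp
qed

theorem lemma2p2:
  fixes U V :: "nat set" and N \<beta> :: real and R R' :: "nat \<Rightarrow> real poly"
  assumes "finite U" and "finite V"
    and "\<forall>u\<in>U. u > 0" and "\<forall>v\<in>V. v > 0"
    and "\<forall>u\<in>U. R u \<noteq> 0 \<and> degree (R u) = u"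
    and "\<forall>v\<in>V. R' v \<noteq> 0 \<and> degree (R' v) = v"
    and "\<forall>u\<in>U. \<forall>v\<in>V. \<beta> + real u - real v \<noteq> 0"
  shows "\<exists>p :: real poly.
     (\<forall>x. denom (card U + card V) (card V) N \<beta> x \<noteq> 0 \<longrightarrow> P_fun U V N \<beta> R R' x = poly p x)
     \<and> int (degree p) = int (\<Sum>U) + int (\<Sum>V) - int (card U choose 2) - int (card V choose 2)
     \<and> lead_coeff p = vandermonde U * vandermonde V * (\<Prod>u\<in>U. lead_coeff (R u))
          * (\<Prod>v\<in>V. lead_coeff (R' v)) * (\<Prod>u\<in>U. \<Prod>v\<in>V. \<beta> + real u - real v)"
proof -
  define k1 where "k1 = card U"
  define k2 where "k2 = card V"
  define k where "k = k1 + k2"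
  define us where "us = sorted_list_of_set U"
  define vs where "vs = sorted_list_of_set V"
  have lus: "length us = k1" unfolding us_def k1_def by simp
  have lvs: "length vs = k2" unfolding vs_def k2_def by simp
  have sus: "sorted_wrt (<) us" unfolding us_def by (rule strict_sorted_list_of_set)
  have svs: "sorted_wrt (<) vs" unfolding vs_def by (rule strict_sorted_list_of_set)
  have dus: "distinct us" unfolding us_def by simp
  have dvs: "distinct vs" unfolding vs_def by simp
  have setus: "set us = U" unfolding us_def using assms(1) by simp
  have setvs: "set vs = V" unfolding vs_def using assms(2) by simp
  have uin: "us!i \<in> U" if "i < k1" for i using that setus lus nth_mem by blast
  have vin: "vs!i \<in> V" if "i < k2" for i using that setvs lvs nth_mem by blast
  have degR: "degree (R (us!i)) = us!i" "R (us!i) \<noteq> 0" if "i < k1" for i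
    using assms(5) uin[OF that] by auto
  have degR': "degree (R' (vs!i)) = vs!i" "R' (vs!i) \<noteq> 0" if "i < k2" for i
    using assms(6) vin[OF that] by auto
  define A where "A = Mp U V N \<beta> R R'"
  have A: "A \<in> carrier_mat k k" unfolding A_def Mp_def k_def k1_def k2_def by simp
  have Aent: "A $$ (i,j) = (if i < k1 then R (us!i) \<circ>\<^sub>p [:of_nat j,1:]
      else Pp (N - of_nat k + 1) k j * Qp (N+\<beta>) j * (R' (vs!(i-k1)) \<circ>\<^sub>p [:of_nat j,1:]))"
    if "i < k" "j < k" for i j
    using that unfolding A_def Mp_def k_def k1_def k2_def us_def vs_def by simp
  define E where "E = A * Tm k"
  have Tk: "Tm k \<in> carrier_mat k k" unfolding Tm_def by simp
  have E: "E \<in> carrier_mat k k" unfolding E_def using A Tk by simp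
  have detE: "det E = det A" unfolding E_def det_mult[OF A Tk] det_Tm by simp
  have eU: "E $$ (i,j) = Dif (\<lambda>l. R (us!i) \<circ>\<^sub>p [:of_nat l,1:]) j" if i: "i < k1" and j: "j < k" for i j
  proof -
    have ik: "i < k" using i k_def by simp
    show ?thesis unfolding E_def mult_Tm[OF A ik j]
    proof (rule Dif_cong)
      fix l assume "l \<le> j"
      then have "l < k" using j by simp
      then show "A $$ (i,l) = R (us!i) \<circ>\<^sub>p [:of_nat l,1:]" using Aent[OF ik] i by simp
    qed
  qed
  have eV: "E $$ (i,j) = Pp (N - of_nat k + 1) k j * Bp N \<beta> (R' (vs!(i-k1))) j"
    if i1: "k1 \<le> i" and i: "i < k" and j: "j < k" for i j
  proof -
    have "E $$ (i,j) = Dif (\<lambda>l. Pp (N - of_nat k + 1) k l * Qp (N+\<beta>) l * (R' (vs!(i-k1)) \<circ>\<^sub>p [:of_nat l,1:])) j"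
      unfolding E_def mult_Tm[OF A i j]
    proof (rule Dif_cong)
      fix l assume "l \<le> j"
      then have "l < k" using j by simp
      then show "A $$ (i,l) = Pp (N - of_nat k + 1) k l * Qp (N+\<beta>) l * (R' (vs!(i-k1)) \<circ>\<^sub>p [:of_nat l,1:])"
        using Aent[OF i] i1 by simp
    qed
    also have "\<dots> = Pp (N - of_nat k + 1) k j * Bp N \<beta> (R' (vs!(i-k1))) j"
      by (rule Dif_V[OF j])
    finally show ?thesis .
  qed
  define a where "a i = (if i < k1 then us!i else k + vs!(i-k1))" for i
  have ik2: "i - k1 < k2" if "i < k" "\<not> i < k1" for i using that k_def by simp
  have degV: "degree (Pp (N - of_nat k + 1) k j * Bp N \<beta> (R' (vs!(i-k1))) j) \<le> (k - j) + vs!(i-k1)"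
    if "i < k" "\<not> i < k1" for i j
  proof -
    have "degree (Pp (N - of_nat k + 1) k j) = k - j" unfolding Pp_def using pochL_deg by simp
    moreover have "degree (Bp N \<beta> (R' (vs!(i-k1))) j) \<le> vs!(i-k1)"
      using Bp_deg[of "R' (vs!(i-k1))" "vs!(i-k1)"] degR'[OF ik2[OF that]] by simp
    ultimately show ?thesis using degree_mult_le[of "Pp (N - of_nat k + 1) k j" "Bp N \<beta> (R' (vs!(i-k1))) j"]
      by simp
  qed
  have degcond: "E $$ (i,j) = 0 \<or> degree (E $$ (i,j)) + j \<le> a i" if i: "i < k" and j: "j < k" for i j
  proof (cases "i < k1")
    case True
    then show ?thesis unfolding eU[OF True j] a_def
      using Dif_U[of "R (us!i)" "us!i" j] degR[OF True] by simp
  next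
    case False
    then have k1i: "k1 \<le> i" by simp
    have "degree (Pp (N - of_nat k + 1) k j * Bp N \<beta> (R' (vs!(i-k1))) j) + j \<le> k + vs!(i-k1)"
      using degV[OF i False, of j] j by arith
    then show ?thesis unfolding eV[OF k1i i j] a_def using False by simp
  qed
  define c where "c i = (if i < k1 then lead_coeff (R (us!i)) else (-1)^k * lead_coeff (R' (vs!(i-k1))))" for i
  define y where "y i = (if i < k1 then real (us!i) else real (vs!(i-k1)) - \<beta>)" for i
  have Ceq: "mat k k (\<lambda>(i,j). coeff (E $$ (i,j)) (a i - j)) = mat k k (\<lambda>(i,j). c i * ff (y i) j)"
  proof (rule eq_matI)
    fix i j assume "i < dim_row (mat k k (\<lambda>(i,j). c i * ff (y i) j))" "j < dim_col (mat k k (\<lambda>(i,j). c i * ff (y i) j))"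
    then have i: "i < k" and j: "j < k" by auto
    have "coeff (E $$ (i,j)) (a i - j) = c i * ff (y i) j"
    proof (cases "i < k1")
      case True
      then show ?thesis unfolding eU[OF True j] a_def c_def y_def
        using Dif_U[of "R (us!i)" "us!i" j] degR[OF True] by simp
    next
      case False
      let ?g = "R' (vs!(i-k1))" and ?v = "vs!(i-k1)"
      have dg: "degree ?g = ?v" using degR'[OF ik2[OF i False]] by simp
      have e: "a i - j = (k - j) + ?v" unfolding a_def using False j by simp
      have "coeff (Pp (N - of_nat k + 1) k j * Bp N \<beta> ?g j) ((k - j) + ?v)
          = coeff (Pp (N - of_nat k + 1) k j) (k - j) * coeff (Bp N \<beta> ?g j) ?v"
        by (rule coeff_mult_bound) (use pochL_deg Bp_deg[of ?g ?v] dg in \<open>auto simp: Pp_def\<close>)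
      also have "\<dots> = (-1)^(k-j) * (lead_coeff ?g * ((-1)^j * ff (real ?v - \<beta>) j))"
        using pochL_deg Bp_deg[of ?g ?v] dg by (simp add: Pp_def poch_ff)
      also have "\<dots> = ((-1)^(k-j) * (-1)^j) * lead_coeff ?g * ff (real ?v - \<beta>) j" by (simp only: mult_ac)
      also have "(-1::real)^(k-j) * (-1)^j = (-1)^k" using j by (simp add: power_add[symmetric])
      moreover have k1i: "k1 \<le> i" using False by simp
      ultimately show ?thesis unfolding eV[OF k1i i j] e using False
        by (simp add: c_def y_def)
    qed
    then show "mat k k (\<lambda>(i,j). coeff (E $$ (i,j)) (a i - j)) $$ (i,j) = mat k k (\<lambda>(i,j). c i * ff (y i) j) $$ (i,j)"
      using i j by simp
  qed auto
  have ydist: "y i \<noteq> y i'" if "i < k" "i' < k" "i \<noteq> i'" for i i'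
  proof -
    consider "i < k1" "i' < k1" | "\<not> i < k1" "\<not> i' < k1" | "i < k1" "\<not> i' < k1" | "\<not> i < k1" "i' < k1" by blast
    then show ?thesis
    proof cases
      case 1 then show ?thesis unfolding y_def using that dus lus by (simp add: nth_eq_iff_index_eq)
    next
      case 2
      then have "i - k1 \<noteq> i' - k1" using that by simp
      then show ?thesis unfolding y_def using 2 that dvs lvs ik2[OF that(1) 2(1)] ik2[OF that(2) 2(2)] by (simp add: nth_eq_iff_index_eq)
    next
      case 3
      then show ?thesis unfolding y_def using assms(7) uin[of i] vin[OF ik2[OF that(2) 3(2)]] that 3 by force
    next
      case 4
      then show ?thesis unfolding y_def using assms(7) uin[of i'] vin[OF ik2[OF that(1) 4(1)]] that 4 by force
    qed
  qed
  define VD where "VD = (\<Prod>i'<k. \<Prod>i<i'. y i' - y i)"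
  have detC: "det (mat k k (\<lambda>(i,j). coeff (E $$ (i,j)) (a i - j))) = (\<Prod>i=0..<k. c i) * VD"
  proof -
    have vv: "det (mat k k (\<lambda>(i,j). ff (y i) j)) = (\<Prod>i'<k. \<Prod>i<i'. y i' - y i)"
      by (rule vdm) (use ydist in auto)
    show ?thesis unfolding Ceq det_row_scale[of k c "\<lambda>i j. ff (y i) j"] VD_def vv ..
  qed
  have cne: "c i \<noteq> 0" if "i < k" for i
  proof (cases "i < k1")
    case True then show ?thesis unfolding c_def if_P[OF True] using degR(2)[OF True] by simp
  next
    case False then show ?thesis unfolding c_def if_not_P[OF False] using degR'(2)[OF ik2[OF that False]] by simp
  qed
  have VDne: "VD \<noteq> 0" unfolding VD_def using ydist by (auto simp: prod_zero_iff)
  have detCne: "det (mat k k (\<lambda>(i,j). coeff (E $$ (i,j)) (a i - j))) \<noteq> 0"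
    unfolding detC using cne VDne by (auto simp: prod_zero_iff)
  have degcond': "\<And>i j. i < k \<Longrightarrow> j < k \<Longrightarrow> E $$ (i,j) = 0 \<or> degree (E $$ (i,j)) + j \<le> a i"
    using degcond by blast
  note dcb = det_coeff_bound[of E k a, OF E degcond']
  define D where "D = sum a {0..<k} - sum id {0..<k}"
  have dE: "degree (det E) \<le> D" unfolding D_def using dcb(1) by simp
  have cE: "coeff (det E) D = (\<Prod>i=0..<k. c i) * VD" unfolding D_def using dcb(2) detC by simp
  have sle: "sum id {0..<k} \<le> sum a {0..<k}" using dcb(3) detCne by blast
  have cEne: "coeff (det E) D \<noteq> 0" unfolding cE using cne VDne by (auto simp: prod_zero_iff)
  have degE: "degree (det E) = D" using dE le_degree[OF cEne] by simp
  have leadE: "lead_coeff (det E) = (\<Prod>i=0..<k. c i) * VD" using degE cE by simp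
  have dv: "denp k k2 N \<beta> dvd det A"
    by (rule denp_dvd[OF k_def A, of N \<beta> "\<lambda>i j. R' (vs!(i-k1)) \<circ>\<^sub>p [:of_nat j,1:]"]) (simp add: Aent)
  then obtain p where pA: "det A = denp k k2 N \<beta> * p" by (auto elim: dvdE)
  note dd = denp_deg[OF k_def, of N \<beta>]
  have dpne: "denp k k2 N \<beta> \<noteq> 0" using dd by auto
  have detAne: "det A \<noteq> 0" using cEne detE by auto
  have pne: "p \<noteq> 0" using detAne pA by auto
  have degA: "degree (det A) = k2 * k2 + degree p" unfolding pA using degree_mult_eq[OF dpne pne] dd by simp
  have ld: "lead_coeff (denp k k2 N \<beta>) = (-1)^(k2*k2)" using dd by blast
  have leadA: "lead_coeff (det A) = (-1)^(k2*k2) * lead_coeff p" unfolding pA lead_coeff_mult ld ..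
  show ?thesis
  proof (intro exI[of _ p] conjI allI impI)
    fix x assume dx: "denom (card U + card V) (card V) N \<beta> x \<noteq> 0"
    have "P_fun U V N \<beta> R R' x = poly (det A) x / denom k k2 N \<beta> x"
      unfolding P_fun_def M_mat_eval poly_det A_def k_def k1_def k2_def ..
    also have "\<dots> = poly p x"
      unfolding pA poly_mult denp_eval using dx unfolding k_def k1_def k2_def by simp
    finally show "P_fun U V N \<beta> R R' x = poly p x" .
  next
    have sa: "sum a {0..<k} = \<Sum>U + (k2 * k + \<Sum>V)"
    proof -
      have "sum a {0..<k} = (\<Sum>i<k1. a i) + (\<Sum>m<k2. a (k1 + m))"
        unfolding atLeast0LessThan k_def by (rule sum_split_add)
      also have "(\<Sum>i<k1. a i) = (\<Sum>i<length us. us!i)" unfolding a_def lus by simp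
      also have "\<dots> = \<Sum>U" using sum_nth_set[OF dus, of id] setus by simp
      also have "(\<Sum>m<k2. a (k1 + m)) = (\<Sum>m<length vs. k + vs!m)" unfolding a_def lvs by simp
      also have "\<dots> = k2 * k + \<Sum>V" using sum_nth_set[OF dvs, of id] setvs lvs by (simp add: sum.distrib)
      finally show ?thesis .
    qed
    have h2: "2 * int (sum id {0..<k}) = int k * (int k - 1)"
    proof -
      have "2 * sum id {0..<k} = k * (k - 1)" using two_sum[of k] by (simp add: atLeast0LessThan)
      then have "int (2 * sum id {0..<k}) = int (k * (k - 1))" by simp
      then show ?thesis by (cases k) (auto simp: algebra_simps)
    qed
    have h3: "2 * int (k1 choose 2) = int k1 * (int k1 - 1)"
    proof -
      have "int (2 * (k1 choose 2)) = int (k1 * (k1 - 1))" using two_choose[of k1] by simp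
      then show ?thesis by (cases k1) (auto simp: algebra_simps)
    qed
    have h4: "2 * int (k2 choose 2) = int k2 * (int k2 - 1)"
    proof -
      have "int (2 * (k2 choose 2)) = int (k2 * (k2 - 1))" using two_choose[of k2] by simp
      then show ?thesis by (cases k2) (auto simp: algebra_simps)
    qed
    have h1: "int D = int (\<Sum>U) + int k2 * int k + int (\<Sum>V) - int (sum id {0..<k})"
      unfolding D_def using sle sa by (simp add: of_nat_diff)
    have "D = k2 * k2 + degree p" using degA degE detE by simp
    then have h5: "int D = int k2 * int k2 + int (degree p)" by simp
    have kk: "int k = int k1 + int k2" unfolding k_def by simp
    have "2 * int (degree p) = 2 * int (\<Sum>U) + 2 * int (\<Sum>V) + 2 * int k2 * int k - int k * (int k - 1) - 2 * int k2 * int k2"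
      using h1 h2 h5 by linarith
    also have "\<dots> = 2 * int (\<Sum>U) + 2 * int (\<Sum>V) - int k1 * (int k1 - 1) - int k2 * (int k2 - 1)"
      unfolding kk by (simp add: algebra_simps)
    finally have "2 * int (degree p) = 2 * int (\<Sum>U) + 2 * int (\<Sum>V) - 2 * int (k1 choose 2) - 2 * int (k2 choose 2)"
      using h3 h4 by linarith
    then show "int (degree p) = int (\<Sum>U) + int (\<Sum>V) - int (card U choose 2) - int (card V choose 2)"
      unfolding k1_def k2_def by linarith
  next
    have pc: "(\<Prod>i=0..<k. c i) = (\<Prod>u\<in>U. lead_coeff (R u)) * (((-1)^k)^k2 * (\<Prod>v\<in>V. lead_coeff (R' v)))"
    proof -
      have "(\<Prod>i=0..<k. c i) = (\<Prod>i<k1. c i) * (\<Prod>m<k2. c (k1 + m))"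
        unfolding atLeast0LessThan k_def by (rule prod_split_add)
      also have "(\<Prod>i<k1. c i) = (\<Prod>i<length us. lead_coeff (R (us!i)))" unfolding c_def lus by simp
      also have "\<dots> = (\<Prod>u\<in>U. lead_coeff (R u))" using prod_nth_set[OF dus, of "\<lambda>u. lead_coeff (R u)"] setus by simp
      also have "(\<Prod>m<k2. c (k1 + m)) = (\<Prod>m<length vs. (-1)^k * lead_coeff (R' (vs!m)))" unfolding c_def lvs by simp
      also have "\<dots> = ((-1)^k)^k2 * (\<Prod>v\<in>V. lead_coeff (R' v))"
        using prod_nth_set[OF dvs, of "\<lambda>v. lead_coeff (R' v)"] setvs lvs by (simp add: prod.distrib)
      finally show ?thesis .
    qed
    have cross: "(\<Prod>m<k2. \<Prod>i<k1. real (vs!m) - \<beta> - real (us!i)) = ((-1)^k2)^k1 * (\<Prod>u\<in>U. \<Prod>v\<in>V. \<beta> + real u - real v)"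
    proof -
      have "(\<Prod>m<k2. \<Prod>i<k1. real (vs!m) - \<beta> - real (us!i)) = (\<Prod>m<length vs. \<Prod>u\<in>U. real (vs!m) - \<beta> - real u)"
        unfolding lvs
      proof (rule prod.cong[OF refl])
        fix m show "(\<Prod>i<k1. real (vs!m) - \<beta> - real (us!i)) = (\<Prod>u\<in>U. real (vs!m) - \<beta> - real u)"
          using prod_nth_set[OF dus, of "\<lambda>u. real (vs!m) - \<beta> - real u"] setus lus by simp
      qed
      also have "\<dots> = (\<Prod>v\<in>V. \<Prod>u\<in>U. real v - \<beta> - real u)"
        using prod_nth_set[OF dvs, of "\<lambda>v. \<Prod>u\<in>U. real v - \<beta> - real u"] setvs by simp
      also have "\<dots> = (\<Prod>u\<in>U. \<Prod>v\<in>V. (-1) * (\<beta> + real u - real v))"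
        by (subst prod.swap) (simp add: algebra_simps)
      also have "\<dots> = (\<Prod>u\<in>U. (-1)^k2 * (\<Prod>v\<in>V. \<beta> + real u - real v))"
        unfolding prod.distrib k2_def by simp
      also have "\<dots> = ((-1)^k2)^k1 * (\<Prod>u\<in>U. \<Prod>v\<in>V. \<beta> + real u - real v)"
        unfolding prod.distrib k1_def by simp
      finally show ?thesis .
    qed
    have vd: "VD = vandermonde U * (((-1)^k2)^k1 * (\<Prod>u\<in>U. \<Prod>v\<in>V. \<beta> + real u - real v)) * vandermonde V"
    proof -
      have "VD = (\<Prod>i'<k1. \<Prod>i<i'. y i' - y i) * (\<Prod>m<k2. \<Prod>i<k1+m. y (k1+m) - y i)"
        unfolding VD_def k_def by (rule prod_split_add)
      also have "(\<Prod>i'<k1. \<Prod>i<i'. y i' - y i) = (\<Prod>i'<length us. \<Prod>i<i'. real (us!i') - real (us!i))"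
        unfolding lus by (rule prod.cong, simp, rule prod.cong) (auto simp: y_def)
      also have "\<dots> = vandermonde U" using vand_conv[OF sus] setus by simp
      also have "(\<Prod>m<k2. \<Prod>i<k1+m. y (k1+m) - y i)
          = (\<Prod>m<k2. (\<Prod>i<k1. real (vs!m) - \<beta> - real (us!i)) * (\<Prod>i<m. real (vs!m) - real (vs!i)))"
      proof (rule prod.cong)
        fix m assume "m \<in> {..<k2}"
        show "(\<Prod>i<k1+m. y (k1+m) - y i) = (\<Prod>i<k1. real (vs!m) - \<beta> - real (us!i)) * (\<Prod>i<m. real (vs!m) - real (vs!i))"
          unfolding prod_split_add by (intro arg_cong2[where f="(*)"] prod.cong) (auto simp: y_def)
      qed simp
      also have "\<dots> = (\<Prod>m<k2. \<Prod>i<k1. real (vs!m) - \<beta> - real (us!i)) * (\<Prod>m<length vs. \<Prod>i<m. real (vs!m) - real (vs!i))"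
        unfolding prod.distrib lvs ..
      also have "(\<Prod>m<length vs. \<Prod>i<m. real (vs!m) - real (vs!i)) = vandermonde V"
        using vand_conv[OF svs] setvs by simp
      finally show ?thesis unfolding cross by (simp only: mult_ac)
    qed
    have sgn: "(-1::real)^(k2*k2) * (((-1)^k)^k2 * ((-1)^k2)^k1) = 1"
    proof -
      have e: "k2*k2 + (k*k2 + k2*k1) = 2 * (k2*k2 + k1*k2)" unfolding k_def by (simp add: algebra_simps)
      have "(-1::real)^(k2*k2 + (k*k2 + k2*k1)) = 1" unfolding e power_mult by simp
      then show ?thesis by (simp add: power_add power_mult)
    qed
    have "(-1)^(k2*k2) * lead_coeff p = (\<Prod>i=0..<k. c i) * VD" using leadA leadE detE by simp
    then have "(-1)^(k2*k2) * ((-1)^(k2*k2) * lead_coeff p) = (-1)^(k2*k2) * ((\<Prod>i=0..<k. c i) * VD)" by simp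
    moreover have "(-1::real)^(k2*k2) * (-1)^(k2*k2) = 1" by (simp add: power_add[symmetric])
    ultimately have "lead_coeff p = (-1)^(k2*k2) * ((\<Prod>i=0..<k. c i) * VD)" by (simp add: mult.assoc[symmetric])
    also have "\<dots> = ((-1)^(k2*k2) * (((-1)^k)^k2 * ((-1)^k2)^k1)) * (vandermonde U * vandermonde V * (\<Prod>u\<in>U. lead_coeff (R u))
          * (\<Prod>v\<in>V. lead_coeff (R' v)) * (\<Prod>u\<in>U. \<Prod>v\<in>V. \<beta> + real u - real v))"
      unfolding pc vd by (simp only: mult_ac)
    finally show "lead_coeff p = vandermonde U * vandermonde V * (\<Prod>u\<in>U. lead_coeff (R u))
          * (\<Prod>v\<in>V. lead_coeff (R' v)) * (\<Prod>u\<in>U. \<Prod>v\<in>V. \<beta> + real u - real v)"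
      unfolding sgn by simp
  qed
qed

end
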